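(* Let $(\Omega,\mathscr{A},\mu)$ be a finite measure space, let $P$ be a finite set, and let $\{A_p\}_{p\in P}\subseteq\mathscr{A}$ be a family of measurable sets. Let $\{B_1,B^*_1\},\{B_2,B^*_2\},\dots,\{B_k,B^*_k\}$ be pairs of subsets of $P$ such that for every $i\in\{1,\dots,k\}$ we have $B_i\cap B^*_i=\emptyset$ and $$\bigcap_{p\in B_i}A_p\subseteq\bigcup_{p\in B^*_i}A_p .$$ For $i\in\{1,\dots,k\}$ put $$\mathscr{B}_i=\{I\subseteq P:\ I\supseteq B_i,\ \text{and } I\not\supseteq B_j\setminus B^*_i \text{ for every } j<i\},$$ and $\mathscr{B}=\mathscr{B}_1\cup\mathscr{B}_2\cup\cdots\cup\mathscr{B}_k$. Then $$\mu\Big(\bigcap_{p\in P}\overline{A}_p\Big)=\sum_{I\in 2^P\setminus\mathscr{B}}(-1)^{|I|}\,\mu\Big(\bigcap_{i\in I}A_i\Big).$$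
   Context: $\overline{A}_p=\Omega\setminus A_p$ denotes the complement of $A_p$; $2^P$ denotes the power set of $P$; the intersection over the empty index set is $\Omega$. No ordering on $P$ is assumed; the pairs are indexed $1,\dots,k$ and the condition "$j<i$" refers to these indices. *)

theory Defs
  imports "HOL-Analysis.Analysis"
begin

text \<open>Intersection of the sets A p over p in I, taken inside the space Omega;
  the intersection over the empty index set is Omega.\<close>
definition inter_in :: "'a set \<Rightarrow> ('p \<Rightarrow> 'a set) \<Rightarrow> 'p set \<Rightarrow> 'a set" where
  "inter_in \<Omega> A I = \<Omega> \<inter> (\<Inter>p\<in>I. A p)"

definition Bfam :: "'p set \<Rightarrow> (nat \<Rightarrow> 'p set) \<Rightarrow> (nat \<Rightarrow> 'p set) \<Rightarrow> nat \<Rightarrow> 'p set set" where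
  "Bfam P B Bs i = {I. I \<subseteq> P \<and> B i \<subseteq> I \<and> (\<forall>j\<in>{1..<i}. \<not> (B j - Bs i \<subseteq> I))}"

end

theory Submission
  imports Defs
begin

lemma toggle_sum:
  fixes F :: "'p set set"
  assumes fin: "finite F" and fI: "\<forall>I\<in>F. finite I"
    and cl: "\<forall>I\<in>F. insert q I \<in> F \<and> I - {q} \<in> F"
  shows "(\<Sum>I\<in>F. (-1::real)^card I) = 0"
proof -
  define F1 where "F1 = {I\<in>F. q \<notin> I}"
  define F2 where "F2 = {I\<in>F. q \<in> I}"
  have split: "F = F1 \<union> F2" "F1 \<inter> F2 = {}" unfolding F1_def F2_def by auto
  have img: "F2 = insert q ` F1"
  proof
    show "F2 \<subseteq> insert q ` F1"
    proof
      fix I assume "I \<in> F2"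
      then have "I - {q} \<in> F1" "I = insert q (I - {q})" using cl unfolding F1_def F2_def by auto
      then show "I \<in> insert q ` F1" by blast
    qed
    show "insert q ` F1 \<subseteq> F2" using cl unfolding F1_def F2_def by auto
  qed
  have inj: "inj_on (insert q) F1" unfolding F1_def inj_on_def by (auto simp: insert_ident)
  have "(\<Sum>I\<in>F2. (-1::real)^card I) = (\<Sum>I\<in>F1. (-1::real)^card (insert q I))"
    unfolding img by (rule sum.reindex[OF inj, unfolded comp_def])
  also have "\<dots> = (\<Sum>I\<in>F1. - ((-1::real)^card I))"
    by (rule sum.cong) (use fI in \<open>auto simp: F1_def\<close>)
  finally have e: "(\<Sum>I\<in>F2. (-1::real)^card I) = - (\<Sum>I\<in>F1. (-1::real)^card I)"
    by (simp add: sum_negf)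
  have "finite F1" "finite F2" using fin unfolding F1_def F2_def by auto
  then have "(\<Sum>I\<in>F. (-1::real)^card I) = (\<Sum>I\<in>F1. (-1::real)^card I) + (\<Sum>I\<in>F2. (-1::real)^card I)"
    using split by (simp add: sum.union_disjoint)
  then show ?thesis using e by simp
qed

lemma comb:
  fixes S :: "'p set"
  assumes fS: "finite S" and SP: "S \<subseteq> P"
    and cov: "\<And>i. i \<in> {1..k} \<Longrightarrow> B i \<subseteq> S \<Longrightarrow> S \<inter> Bs i \<noteq> {}"
    and dis: "\<And>i. i \<in> {1..k} \<Longrightarrow> B i \<inter> Bs i = {}"
  shows "(\<Sum>I\<in>Pow S - (\<Union>i\<in>{1..k}. Bfam P B Bs i). (-1::real)^card I) = (if S = {} then 1 else 0)"
proof -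
  let ?f = "\<lambda>I. (-1::real)^card I"
  define G where "G i = Pow S \<inter> Bfam P B Bs i" for i
  have finPS: "finite (Pow S)" using fS by simp
  have tot: "(\<Sum>I\<in>Pow S. ?f I) = (if S = {} then 1 else 0)"
  proof (cases "S = {}")
    case False
    then obtain s where "s \<in> S" by blast
    then have "(\<Sum>I\<in>Pow S. ?f I) = 0"
      by (intro toggle_sum) (auto intro: finite_subset[OF _ fS])
    then show ?thesis using False by simp
  qed simp
  have Gz: "(\<Sum>I\<in>G i. ?f I) = 0" if i: "i \<in> {1..k}" for i
  proof (cases "B i \<subseteq> S")
    case False
    then have "G i = {}" unfolding G_def Bfam_def by auto
    then show ?thesis by simp
  next
    case True
    then obtain q where q: "q \<in> S" "q \<in> Bs i" using cov[OF i] by blast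
    have qB: "q \<notin> B i" using dis[OF i] q by blast
    show ?thesis
    proof (rule toggle_sum)
      show "finite (G i)" using finPS unfolding G_def by simp
      show "\<forall>I\<in>G i. finite I" unfolding G_def by (auto intro: finite_subset[OF _ fS])
      show "\<forall>I\<in>G i. insert q I \<in> G i \<and> I - {q} \<in> G i"
      proof
        fix I assume I: "I \<in> G i"
        have a: "\<forall>j\<in>{1..<i}. \<not> (B j - Bs i \<subseteq> insert q I)"
          using I q unfolding G_def Bfam_def by auto
        have b: "\<forall>j\<in>{1..<i}. \<not> (B j - Bs i \<subseteq> I - {q})"
          using I unfolding G_def Bfam_def by auto
        show "insert q I \<in> G i \<and> I - {q} \<in> G i"
          using I a b q qB SP unfolding G_def Bfam_def by auto
      qed
    qed
  qed
  have disj: "G i \<inter> G j = {}" if "i \<in> {1..k}" "j \<in> {1..k}" "i \<noteq> j" for i j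
  proof -
    have *: "G a \<inter> G b = {}" if ab: "a < b" "1 \<le> a" for a b
    proof -
      { fix I assume "I \<in> G a" "I \<in> G b"
        then have "B a \<subseteq> I" "\<not> (B a - Bs b \<subseteq> I)"
          using ab unfolding G_def Bfam_def by auto
        then have False by blast }
      then show ?thesis by blast
    qed
    show ?thesis
    proof (cases "i < j")
      case False
      then have "j < i" using that(3) by simp
      then show ?thesis using that * by (metis Int_commute atLeastAtMost_iff)
    next
      case True
      then show ?thesis using that by (intro *) auto
    qed
  qed
  have U: "Pow S \<inter> (\<Union>i\<in>{1..k}. Bfam P B Bs i) = (\<Union>i\<in>{1..k}. G i)"
    unfolding G_def by auto
  have "(\<Sum>I\<in>(\<Union>i\<in>{1..k}. G i). ?f I) = (\<Sum>i\<in>{1..k}. \<Sum>I\<in>G i. ?f I)"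
  proof (rule sum.UNION_disjoint)
    show "\<forall>i\<in>{1..k}. finite (G i)" using finPS unfolding G_def by simp
  qed (use disj in auto)
  also have "\<dots> = 0" using Gz by simp
  finally have z: "(\<Sum>I\<in>Pow S \<inter> (\<Union>i\<in>{1..k}. Bfam P B Bs i). ?f I) = 0" using U by simp
  define X where "X = (\<Union>i\<in>{1..k}. Bfam P B Bs i)"
  have eqU: "Pow S = (Pow S - X) \<union> (Pow S \<inter> X)" and dj: "(Pow S - X) \<inter> (Pow S \<inter> X) = {}" by blast+
  have "(\<Sum>I\<in>Pow S. ?f I) = (\<Sum>I\<in>Pow S - X. ?f I) + (\<Sum>I\<in>Pow S \<inter> X. ?f I)"
    by (subst eqU, rule sum.union_disjoint) (use finPS dj in auto)
  then have "(\<Sum>I\<in>Pow S. ?f I) = (\<Sum>I\<in>Pow S - (\<Union>i\<in>{1..k}. Bfam P B Bs i). ?f I)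
        + (\<Sum>I\<in>Pow S \<inter> (\<Union>i\<in>{1..k}. Bfam P B Bs i). ?f I)" unfolding X_def .
  then show ?thesis using z tot by simp
qed

theorem theorem2:
  fixes M :: "'a measure" and P :: "'p set" and A :: "'p \<Rightarrow> 'a set"
    and k :: nat and B Bs :: "nat \<Rightarrow> 'p set"
  assumes "finite_measure M"
    and "finite P"
    and "\<And>p. p \<in> P \<Longrightarrow> A p \<in> sets M"
    and "\<And>i. i \<in> {1..k} \<Longrightarrow> B i \<subseteq> P \<and> Bs i \<subseteq> P"
    and "\<And>i. i \<in> {1..k} \<Longrightarrow> B i \<inter> Bs i = {}"
    and "\<And>i. i \<in> {1..k} \<Longrightarrow> inter_in (space M) A (B i) \<subseteq> (\<Union>p\<in>Bs i. A p)"
  shows "measure M (inter_in (space M) (\<lambda>p. space M - A p) P)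
    = (\<Sum>I\<in>Pow P - (\<Union>i\<in>{1..k}. Bfam P B Bs i).
         (-1) ^ card I * measure M (inter_in (space M) A I))"
proof -
  note fm = assms(1)
  let ?N = "Pow P - (\<Union>i\<in>{1..k}. Bfam P B Bs i)"
  have meas: "inter_in (space M) C I \<in> sets M"
    if "I \<subseteq> P" "\<And>p. p \<in> P \<Longrightarrow> C p \<in> sets M" for I C
  proof (cases "I = {}")
    case True then show ?thesis by (simp add: inter_in_def)
  next
    case False
    have "finite I" using that assms(2) finite_subset by blast
    then have "(\<Inter>p\<in>I. C p) \<in> sets M" using False that by (intro sets.finite_INT) auto
    then show ?thesis unfolding inter_in_def by auto
  qed
  have integ: "integrable M (indicator X :: 'a \<Rightarrow> real)" if "X \<in> sets M" for X
    using that finite_measure.emeasure_finite[OF fm, of X] by (simp add: less_top)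
  have mi: "measure M X = (\<integral>x. indicator X x \<partial>M)" if "X \<in> sets M" for X
    using that sets.sets_into_space[OF that] by (simp add: Int_absorb2)
  have Xc: "inter_in (space M) (\<lambda>p. space M - A p) P \<in> sets M"
    using meas[of P "\<lambda>p. space M - A p"] assms(3) by auto
  have XI: "inter_in (space M) A I \<in> sets M" if "I \<in> ?N" for I
    using meas[of I A] assms(3) that by auto
  have "(\<Sum>I\<in>?N. (-1) ^ card I * measure M (inter_in (space M) A I))
     = (\<Sum>I\<in>?N. (\<integral>x. (-1) ^ card I * indicator (inter_in (space M) A I) x \<partial>M))"
    using XI mi by simp
  also have "\<dots> = (\<integral>x. (\<Sum>I\<in>?N. (-1) ^ card I * indicator (inter_in (space M) A I) x) \<partial>M)"
  proof -
    define f where "f I x = (-1::real) ^ card I * indicator (inter_in (space M) A I) x" for I x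
    have "(\<integral>x. (\<Sum>I\<in>?N. f I x) \<partial>M) = (\<Sum>I\<in>?N. (\<integral>x. f I x \<partial>M))"
      by (rule Bochner_Integration.integral_sum) (unfold f_def, intro integrable_mult_right integ XI)
    then show ?thesis by (simp add: f_def)
  qed
  also have "\<dots> = (\<integral>x. indicator (inter_in (space M) (\<lambda>p. space M - A p) P) x \<partial>M)"
  proof (rule Bochner_Integration.integral_cong[OF refl])
    fix x assume x: "x \<in> space M"
    define S where "S = {p\<in>P. x \<in> A p}"
    have SP: "S \<subseteq> P" and fS: "finite S" using assms(2) unfolding S_def by auto
    have ind: "indicator (inter_in (space M) A I) x = (if I \<subseteq> S then 1 else 0 :: real)"
      if "I \<subseteq> P" for I
      using x that unfolding S_def inter_in_def by (auto simp: indicator_def)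
    have "(\<Sum>I\<in>?N. (-1) ^ card I * indicator (inter_in (space M) A I) x)
        = (\<Sum>I\<in>?N. if I \<subseteq> S then (-1::real) ^ card I else 0)"
      by (rule sum.cong) (auto simp: ind)
    also have "\<dots> = (\<Sum>I\<in>{I\<in>?N. I \<subseteq> S}. (-1::real) ^ card I)"
      by (rule sum.inter_filter[symmetric]) (use assms(2) in simp)
    also have "{I\<in>?N. I \<subseteq> S} = Pow S - (\<Union>i\<in>{1..k}. Bfam P B Bs i)"
      using SP by auto
    also have "(\<Sum>I\<in>Pow S - (\<Union>i\<in>{1..k}. Bfam P B Bs i). (-1::real) ^ card I)
        = (if S = {} then 1 else 0)"
    proof (rule comb[OF fS SP])
      fix i assume i: "i \<in> {1..k}" and BS: "B i \<subseteq> S"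
      have "x \<in> inter_in (space M) A (B i)" using x BS unfolding S_def inter_in_def by auto
      then obtain p where "p \<in> Bs i" "x \<in> A p" using assms(6)[OF i] by blast
      then show "S \<inter> Bs i \<noteq> {}" using assms(4)[OF i] unfolding S_def by auto
    qed (use assms(5) in auto)
    also have "\<dots> = indicator (inter_in (space M) (\<lambda>p. space M - A p) P) x"
      using x unfolding S_def inter_in_def by (auto simp: indicator_def)
    finally show "(\<Sum>I\<in>?N. (-1) ^ card I * indicator (inter_in (space M) A I) x)
        = (indicator (inter_in (space M) (\<lambda>p. space M - A p) P) x :: real)" .
  qed
  also have "\<dots> = measure M (inter_in (space M) (\<lambda>p. space M - A p) P)"
    using mi[OF Xc] by simp
  finally show ?thesis by simp
qed

end
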